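(* Let $I$ be a fuzzy implication function, $T$ a t-norm and $j\in\{1,\dots,n_c\}$. If $I$ satisfies the monotonicity of the generalized modus ponens with respect to $T$, i.e. $T(\tilde x,I(\tilde x,y))\le T(x,I(x,y))$ for all $x,\tilde x,y\in[0,1]$ with $\tilde x\le x$, then $FSupp(R^{S,L}_j)\ge FSupp(R^{\tilde S,\tilde L}_j)$ for all $R^{S,L}_j,R^{\tilde S,\tilde L}_j\in\mathcal{R}^{I,T}$ such that $R^{S,L}_j\prec R^{\tilde S,\tilde L}_j$.
   Context: A fuzzy implication function is a map $I:[0,1]^2\to[0,1]$ decreasing in the first variable, increasing in the second, with $I(0,0)=I(1,1)=1$, $I(1,0)=0$. A t-norm is a commutative, associative, increasing binary operation on $[0,1]$ with neutral element $1$. Setting: features $X_1,\dots,X_{n_f}$ with domains $D_m\subseteq\mathbb{R}$, target $Y$ with domain $D_Y$; examples $E=\{E^d=(e^d_1,\dots,e^d_{n_f},y^d):d=1,\dots,n_e\}$; each feature $X_m$ has labels $LL_m^1,\dots,LL_m^{l_m}$ with membership functions $\mu_{LL_m^n}:D_m\to[0,1]$; classes $\mathrm{Class}_1,\dots,\mathrm{Class}_{n_c}$ with $\mu_{\mathrm{Class}_j}:D_Y\to[0,1]$. A rule $R^{S,L}_j$ is given by a class index $j$, a set of features $S=\{X_{m_1},\dots,X_{m_s}\}$ and a set $L$ with exactly one label $LL^{n_{m_i}}_{m_i}$ per feature in $S$; $\mathcal{R}^{I,T}$ is the set of all such rules. For an example $E^d$: $\mu_{ant}^{R^{S,L}_j,E^d}=T(\mu_{LL^{n_{m_1}}_{m_1}}(e^d_{m_1}),\dots,\mu_{LL^{n_{m_s}}_{m_s}}(e^d_{m_s}))$,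 $\mu_{con}^{R^{S,L}_j,E^d}=\mu_{\mathrm{Class}_j}(y^d)$, $\mu_{eval}^{R^{S,L}_j,E^d}=T\big(\mu_{ant}^{R^{S,L}_j,E^d},I(\mu_{ant}^{R^{S,L}_j,E^d},\mu_{con}^{R^{S,L}_j,E^d})\big)$. The fuzzy support is $FSupp(R^{S,L}_j)=\frac{1}{|E|}\sum_{d=1}^{n_e}\mu_{eval}^{R^{S,L}_j,E^d}$. $R^{\tilde S,\tilde L}_{\tilde j}$ is a refinement of $R^{S,L}_j$, written $R^{S,L}_j\prec R^{\tilde S,\tilde L}_{\tilde j}$, iff $\tilde j=j$, $S\subsetneq\tilde S$, and every label of $L$ belongs to $\tilde L$. *)

theory Defs
  imports Complex_Main
begin

definition fuzzy_implication :: "(real \<Rightarrow> real \<Rightarrow> real) \<Rightarrow> bool" where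
  "fuzzy_implication I \<longleftrightarrow>
     (\<forall>x\<in>{0..1}. \<forall>y\<in>{0..1}. I x y \<in> {0..1}) \<and>
     (\<forall>x1\<in>{0..1}. \<forall>x2\<in>{0..1}. \<forall>y\<in>{0..1}. x1 \<le> x2 \<longrightarrow> I x2 y \<le> I x1 y) \<and>
     (\<forall>x\<in>{0..1}. \<forall>y1\<in>{0..1}. \<forall>y2\<in>{0..1}. y1 \<le> y2 \<longrightarrow> I x y1 \<le> I x y2) \<and>
     I 0 0 = 1 \<and> I 1 1 = 1 \<and> I 1 0 = 0"

definition t_norm :: "(real \<Rightarrow> real \<Rightarrow> real) \<Rightarrow> bool" where
  "t_norm T \<longleftrightarrow>
     (\<forall>x\<in>{0..1}. \<forall>y\<in>{0..1}. T x y \<in> {0..1}) \<and>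
     (\<forall>x\<in>{0..1}. \<forall>y\<in>{0..1}. T x y = T y x) \<and>
     (\<forall>x\<in>{0..1}. \<forall>y\<in>{0..1}. \<forall>z\<in>{0..1}. T x (T y z) = T (T x y) z) \<and>
     (\<forall>x1\<in>{0..1}. \<forall>x2\<in>{0..1}. \<forall>y\<in>{0..1}. x1 \<le> x2 \<longrightarrow> T x1 y \<le> T x2 y) \<and>
     (\<forall>x\<in>{0..1}. T x 1 = x)"

definition mono_GMP :: "(real \<Rightarrow> real \<Rightarrow> real) \<Rightarrow> (real \<Rightarrow> real \<Rightarrow> real) \<Rightarrow> bool" where
  "mono_GMP I T \<longleftrightarrow>
     (\<forall>x\<in>{0..1}. \<forall>x'\<in>{0..1}. \<forall>y\<in>{0..1}. x' \<le> x \<longrightarrow> T x' (I x' y) \<le> T x (I x y))"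

definition tnorm_list :: "(real \<Rightarrow> real \<Rightarrow> real) \<Rightarrow> real list \<Rightarrow> real" where
  "tnorm_list T xs = foldr T xs 1"

text \<open>Rule data: class index j, feature set S (indices in 1..nf), label choice lab m for m in S.
  Example d (in 1..ne) has feature values e d m and target value y d;
  mu m n is the membership function of label n of feature m; muC j that of class j.\<close>

definition mu_ant where
  "mu_ant T mu e S lab d =
     tnorm_list T (map (\<lambda>m. mu m (lab m) (e d m)) (sorted_list_of_set S))"

definition mu_con where
  "mu_con muC y j d = muC j (y d)"

definition mu_eval where
  "mu_eval I T mu muC e y j S lab d =
     T (mu_ant T mu e S lab d) (I (mu_ant T mu e S lab d) (mu_con muC y j d))"

definition FSupp :: "(real \<Rightarrow> real \<Rightarrow> real) \<Rightarrow> (real \<Rightarrow> real \<Rightarrow> real) \<Rightarrow>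
    (nat \<Rightarrow> nat \<Rightarrow> real \<Rightarrow> real) \<Rightarrow> (nat \<Rightarrow> real \<Rightarrow> real) \<Rightarrow>
    (nat \<Rightarrow> nat \<Rightarrow> real) \<Rightarrow> (nat \<Rightarrow> real) \<Rightarrow> nat \<Rightarrow> nat \<Rightarrow> nat set \<Rightarrow> (nat \<Rightarrow> nat) \<Rightarrow> real" where
  "FSupp I T mu muC e y ne j S lab =
     (1 / real ne) * (\<Sum>d\<in>{1..ne}. mu_eval I T mu muC e y j S lab d)"

definition is_rule :: "nat \<Rightarrow> nat \<Rightarrow> (nat \<Rightarrow> nat) \<Rightarrow> nat \<Rightarrow> nat set \<Rightarrow> (nat \<Rightarrow> nat) \<Rightarrow> bool" where
  "is_rule nf nc l j S lab \<longleftrightarrow> j \<in> {1..nc} \<and> S \<subseteq> {1..nf} \<and> (\<forall>m\<in>S. lab m \<in> {1..l m})"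

definition refines :: "nat \<Rightarrow> nat set \<Rightarrow> (nat \<Rightarrow> nat) \<Rightarrow> nat \<Rightarrow> nat set \<Rightarrow> (nat \<Rightarrow> nat) \<Rightarrow> bool" where
  "refines j S lab j' S' lab' \<longleftrightarrow> j' = j \<and> S \<subset> S' \<and> (\<forall>m\<in>S. lab' m = lab m)"

end

theory Submission
  imports Defs
begin

lemma tl_range:
  assumes "t_norm T" "\<forall>m\<in>set xs. f m \<in> {0..1}"
  shows "foldr T (map f xs) 1 \<in> {0..1}"
  using assms(2)
proof (induction xs)
  case Nil then show ?case by simp
next
  case (Cons a xs)
  have "foldr T (map f xs) 1 \<in> {0..1}" using Cons by simp
  moreover have "f a \<in> {0..1}" using Cons.prems by simp
  ultimately show ?case using assms(1) unfolding t_norm_def by simp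
qed

lemma tn_assoc: "t_norm T \<Longrightarrow> x \<in> {0..1} \<Longrightarrow> y \<in> {0..1} \<Longrightarrow> z \<in> {0..1} \<Longrightarrow> T x (T y z) = T (T x y) z"
  unfolding t_norm_def by blast
lemma tn_comm: "t_norm T \<Longrightarrow> x \<in> {0..1} \<Longrightarrow> y \<in> {0..1} \<Longrightarrow> T x y = T y x"
  unfolding t_norm_def by blast
lemma tn_mono: "t_norm T \<Longrightarrow> x \<in> {0..1} \<Longrightarrow> y \<in> {0..1} \<Longrightarrow> z \<in> {0..1} \<Longrightarrow> y \<le> z \<Longrightarrow> T x y \<le> T x z"
  unfolding t_norm_def by (metis)
lemma tn_one: "t_norm T \<Longrightarrow> x \<in> {0..1} \<Longrightarrow> T x 1 = x"
  unfolding t_norm_def by blast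

lemma tl_insort:
  assumes "t_norm T" "\<forall>m\<in>insert x (set xs). f m \<in> {0..1}"
  shows "foldr T (map f (insort x xs)) 1 = T (f x) (foldr T (map f xs) 1)"
  using assms(2)
proof (induction xs)
  case Nil then show ?case by simp
next
  case (Cons a xs)
  have R: "foldr T (map f xs) 1 \<in> {0..1}" by (rule tl_range[OF assms(1)]) (use Cons.prems in simp)
  have fa: "f a \<in> {0..1}" and fx: "f x \<in> {0..1}" using Cons.prems by auto
  show ?case
  proof (cases "x \<le> a")
    case True then show ?thesis by simp
  next
    case False
    have "foldr T (map f (insort x (a # xs))) 1 = T (f a) (T (f x) (foldr T (map f xs) 1))"
      using False Cons by simp
    also have "\<dots> = T (T (f a) (f x)) (foldr T (map f xs) 1)"
      using tn_assoc[OF assms(1) fa fx R] by simp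
    also have "\<dots> = T (T (f x) (f a)) (foldr T (map f xs) 1)"
      using tn_comm[OF assms(1) fa fx] by simp
    also have "\<dots> = T (f x) (T (f a) (foldr T (map f xs) 1))"
      using tn_assoc[OF assms(1) fx fa R] by simp
    finally show ?thesis by simp
  qed
qed

definition FF :: "(real \<Rightarrow> real \<Rightarrow> real) \<Rightarrow> (nat \<Rightarrow> real) \<Rightarrow> nat set \<Rightarrow> real" where "FF T f A = foldr T (map f (sorted_list_of_set A)) 1"

lemma FF_insert:
  assumes "t_norm T" "finite A" "x \<notin> A" "\<forall>m\<in>insert x A. f m \<in> {0..1}"
  shows "FF T f (insert x A) = T (f x) (FF T f A)"
  unfolding FF_def using assms tl_insort[OF assms(1), of x "sorted_list_of_set A" f]
  by (simp add: sorted_list_of_set_insert_remove)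

lemma FF_range:
  assumes "t_norm T" "finite A" "\<forall>m\<in>A. f m \<in> {0..1}"
  shows "FF T f A \<in> {0..1}"
  unfolding FF_def by (rule tl_range[OF assms(1)]) (use assms in simp)

lemma FF_mono:
  assumes "t_norm T" "finite C" "finite A" "\<forall>m\<in>A \<union> C. f m \<in> {0..1}"
  shows "FF T f (A \<union> C) \<le> FF T f A"
  using assms(2,4)
proof (induction C rule: finite_induct)
  case empty then show ?case by simp
next
  case (insert x C)
  show ?case
  proof (cases "x \<in> A \<union> C")
    case True
    then have "A \<union> insert x C = A \<union> C" by auto
    then show ?thesis using insert by simp
  next
    case False
    have fin: "finite (A \<union> C)" using insert assms(3) by simp
    have eq: "A \<union> insert x C = insert x (A \<union> C)" by auto
    have r: "FF T f (A \<union> C) \<in> {0..1}" using FF_range[OF assms(1) fin] insert.prems by auto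
    have fx: "f x \<in> {0..1}" using insert.prems by auto
    have "FF T f (A \<union> insert x C) = T (f x) (FF T f (A \<union> C))"
      unfolding eq using FF_insert[OF assms(1) fin False] insert.prems eq by simp
    also have "\<dots> = T (FF T f (A \<union> C)) (f x)" using tn_comm[OF assms(1) fx r] .
    also have "\<dots> \<le> T (FF T f (A \<union> C)) 1"
      by (rule tn_mono[OF assms(1) r fx]) (use fx in auto)
    also have "\<dots> = FF T f (A \<union> C)" using tn_one[OF assms(1) r] .
    finally show ?thesis using insert by simp
  qed
qed

theorem proposition8:
  fixes I T :: "real \<Rightarrow> real \<Rightarrow> real"
    and nf nc ne :: nat and l :: "nat \<Rightarrow> nat"
    and D :: "nat \<Rightarrow> real set" and DY :: "real set"
    and mu :: "nat \<Rightarrow> nat \<Rightarrow> real \<Rightarrow> real" and muC :: "nat \<Rightarrow> real \<Rightarrow> real"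
    and e :: "nat \<Rightarrow> nat \<Rightarrow> real" and y :: "nat \<Rightarrow> real"
    and j :: nat and S S' :: "nat set" and lab lab' :: "nat \<Rightarrow> nat"
  assumes "fuzzy_implication I" and "t_norm T"
    and "\<forall>d\<in>{1..ne}. (\<forall>m\<in>{1..nf}. e d m \<in> D m) \<and> y d \<in> DY"
    and "\<forall>m\<in>{1..nf}. \<forall>n\<in>{1..l m}. \<forall>x\<in>D m. mu m n x \<in> {0..1}"
    and "\<forall>c\<in>{1..nc}. \<forall>x\<in>DY. muC c x \<in> {0..1}"
    and "j \<in> {1..nc}"
    and "mono_GMP I T"
    and "is_rule nf nc l j S lab" and "is_rule nf nc l j S' lab'"
    and "refines j S lab j S' lab'"
  shows "FSupp I T mu muC e y ne j S lab \<ge> FSupp I T mu muC e y ne j S' lab'"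
proof -
  have SS: "S \<subseteq> S'" and labeq: "\<forall>m\<in>S. lab' m = lab m" and S'sub: "S' \<subseteq> {1..nf}"
    and labs: "\<forall>m\<in>S'. lab' m \<in> {1..l m}"
    using assms(9,10) unfolding refines_def is_rule_def by auto
  have finS': "finite S'" using S'sub finite_subset by blast
  have finS: "finite S" using SS finS' finite_subset by blast
  have ev: "mu_eval I T mu muC e y j S' lab' d \<le> mu_eval I T mu muC e y j S lab d"
    if d: "d \<in> {1..ne}" for d
  proof -
    define f where "f = (\<lambda>m. mu m (lab' m) (e d m))"
    have frange: "\<forall>m\<in>S \<union> (S' - S). f m \<in> {0..1}"
    proof
      fix m assume "m \<in> S \<union> (S' - S)"
      then have m: "m \<in> S'" using SS by auto
      then have "m \<in> {1..nf}" using S'sub by auto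
      then have "e d m \<in> D m" using assms(3) d by blast
      moreover have "lab' m \<in> {1..l m}" using labs m by blast
      ultimately show "f m \<in> {0..1}" unfolding f_def using assms(4) \<open>m \<in> {1..nf}\<close> by blast
    qed
    have a1: "mu_ant T mu e S' lab' d = FF T f S'"
      unfolding mu_ant_def FF_def tnorm_list_def f_def by simp
    have a2: "mu_ant T mu e S lab d = FF T f S"
      unfolding mu_ant_def FF_def tnorm_list_def f_def
      by (intro arg_cong[where f="\<lambda>xs. foldr T xs 1"] map_cong) (auto simp: labeq finS)
    have U: "S \<union> (S' - S) = S'" using SS by auto
    have le: "FF T f S' \<le> FF T f S"
      using FF_mono[OF assms(2) _ finS frange] finS' U by simp
    have r1: "FF T f S' \<in> {0..1}" using FF_range[OF assms(2) finS'] frange U by simp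
    have r2: "FF T f S \<in> {0..1}" using FF_range[OF assms(2) finS] frange by simp
    have yc: "mu_con muC y j d \<in> {0..1}" unfolding mu_con_def using assms(3,5,6) d by blast
    show ?thesis unfolding mu_eval_def a1 a2
      using assms(7) r1 r2 yc le unfolding mono_GMP_def by simp
  qed
  have "(\<Sum>d\<in>{1..ne}. mu_eval I T mu muC e y j S' lab' d) \<le> (\<Sum>d\<in>{1..ne}. mu_eval I T mu muC e y j S lab d)"
    using ev by (rule sum_mono)
  then show ?thesis unfolding FSupp_def by (intro mult_left_mono) auto
qed

end
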